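(* Let $n\ge1$ and $0\le j\le n-1$. For every graph $G^*$ on $n$ vertices with at most one loop per vertex, \[\lambda_1(G^* )-\lambda_{n-j}(G^* )\le \frac n2\left(1+\sqrt{\frac{j+2}{j+1}}\right).\] Consequently, $s_{0,j}\le \frac12\left(1+\sqrt{\frac{j+2}{j+1}}\right)$.
   Context: A graph with at most one loop per vertex on vertex set $\{1,\dots,n\}$ is identified with its adjacency matrix $A=(a_{uv})$, a symmetric $n\times n$ $(0,1)$-matrix where $a_{uv}=1$ iff $uv$ is an edge and $a_{uu}=1$ iff there is a loop at $u$. Its eigenvalues (of $A$) are listed as $\lambda_1\ge\cdots\ge\lambda_n$. For a simple graph $G$ on $n$ vertices, ${\rm spread}_{i,j}(G)=\lambda_{i+1}(G)-\lambda_{n-j}(G)$; ${\rm spread}_{i,j}(n)$ is the maximum of ${\rm spread}_{i,j}(G)$ over all simple graphs $G$ on $n$ vertices, and $s_{i,j}=\lim_{n\to\infty}{\rm spread}_{i,j}(n)/n$ (this limit is known to exist). *)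

theory Defs
  imports "Jordan_Normal_Form.Char_Poly"
begin

text \<open>Adjacency matrix (0-indexed, vertices 0..n-1) of a graph with at most one loop per vertex:
  a symmetric n x n (0,1)-matrix.\<close>
definition loop_graph_adj :: "nat \<Rightarrow> real mat \<Rightarrow> bool" where
  "loop_graph_adj n A \<longleftrightarrow> A \<in> carrier_mat n n \<and>
     (\<forall>u<n. \<forall>v<n. (A $$ (u,v) = 0 \<or> A $$ (u,v) = 1) \<and> A $$ (u,v) = A $$ (v,u))"

definition simple_graph_adj :: "nat \<Rightarrow> real mat \<Rightarrow> bool" where
  "simple_graph_adj n A \<longleftrightarrow> loop_graph_adj n A \<and> (\<forall>u<n. A $$ (u,u) = 0)"

text \<open>Eigenvalues (roots of the characteristic polynomial, with multiplicity), in
  non-increasing order; eig A k is lambda_k (1-indexed).\<close>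
definition eigs :: "real mat \<Rightarrow> real list" where
  "eigs A = rev (sorted_list_of_multiset (proots (char_poly A)))"

definition eig :: "real mat \<Rightarrow> nat \<Rightarrow> real" where
  "eig A k = eigs A ! (k - 1)"

definition spread :: "nat \<Rightarrow> nat \<Rightarrow> nat \<Rightarrow> real" where
  "spread i j n = Max {eig A (i+1) - eig A (n-j) | A. simple_graph_adj n A}"

end

theory Submission
  imports Defs "Jordan_Normal_Form.Schur_Decomposition"
begin

lemma sym_real_eig:
  fixes A :: "real mat" and a :: complex
  assumes A: "A \<in> carrier_mat n n" and sym: "\<forall>i<n. \<forall>j<n. A$$(i,j) = A$$(j,i)"
    and ev: "eigenvalue (map_mat complex_of_real A) a"
  shows "Im a = 0"
proof -
  let ?C = "map_mat complex_of_real A"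
  from ev obtain v where v: "v \<in> carrier_vec n" "v \<noteq> 0\<^sub>v n" "?C *\<^sub>v v = a \<cdot>\<^sub>v v"
    unfolding eigenvalue_def eigenvector_def using A by auto
  have row: "\<And>i. i < n \<Longrightarrow> (\<Sum>j<n. of_real (A$$(i,j)) * v$j) = a * v$i"
  proof -
    fix i assume i: "i < n"
    have "(?C *\<^sub>v v) $ i = (a \<cdot>\<^sub>v v) $ i" using v by simp
    thus "(\<Sum>j<n. of_real (A$$(i,j)) * v$j) = a * v$i"
      using i A v(1) by (auto simp: mult_mat_vec_def scalar_prod_def row_def lessThan_atLeast0)
  qed
  define S where "S = (\<Sum>i<n. \<Sum>j<n. of_real (A$$(i,j)) * v$j * cnj (v$i))"
  have S1: "S = a * (\<Sum>i<n. v$i * cnj (v$i))"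
    unfolding S_def sum_distrib_left
    by (rule sum.cong[OF refl], subst sum_distrib_right[symmetric], simp add: row mult.assoc)
  have "cnj S = (\<Sum>i<n. \<Sum>j<n. of_real (A$$(i,j)) * cnj (v$j) * v$i)"
    unfolding S_def by (simp add: mult.commute)
  also have "\<dots> = (\<Sum>j<n. \<Sum>i<n. of_real (A$$(i,j)) * cnj (v$j) * v$i)"
    by (rule sum.swap)
  also have "\<dots> = S" unfolding S_def
    by (rule sum.cong[OF refl], rule sum.cong[OF refl], simp add: sym mult.commute)
  finally have S2: "cnj S = S" .
  define N where "N = (\<Sum>i<n. v$i * cnj (v$i))"
  have Nr: "cnj N = N" unfolding N_def by (simp add: mult.commute)
  have "N \<noteq> 0"
  proof
    assume N0: "N = 0"
    have "N = of_real (\<Sum>i<n. (Re (v$i))^2 + (Im (v$i))^2)" unfolding N_def of_real_sum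
      by (rule sum.cong[OF refl], rule complex_mult_cnj)
    hence "(\<Sum>i<n. (Re (v$i))^2 + (Im (v$i))^2) = 0" using N0 by (metis of_real_eq_0_iff)
    hence "\<forall>i\<in>{..<n}. (Re (v$i))^2 + (Im (v$i))^2 = 0" by (subst (asm) sum_nonneg_eq_0_iff) auto
    hence "v = 0\<^sub>v n" using v(1) by (intro eq_vecI) (auto simp: complex_eq_iff)
    with v(2) show False by simp
  qed
  from S1 S2 Nr have "cnj a * N = a * N" unfolding N_def[symmetric]
    by (metis complex_cnj_mult)
  with \<open>N \<noteq> 0\<close> have "cnj a = a" by simp
  thus ?thesis by (metis Reals_cnj_iff complex_is_Real_iff)
qed

lemma sym_char_poly_split:
  fixes A :: "real mat"
  assumes A: "A \<in> carrier_mat n n" and sym: "\<forall>i<n. \<forall>j<n. A$$(i,j) = A$$(j,i)"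
  shows "\<exists>rs. char_poly A = (\<Prod>r\<leftarrow>rs. [:-r,1:]) \<and> length rs = n"
proof -
  let ?C = "map_mat complex_of_real A"
  have C: "?C \<in> carrier_mat n n" using A by simp
  obtain as where as: "char_poly ?C = (\<Prod>a\<leftarrow>as. [:-a,1:])" "length as = n"
    using char_poly_factorized[OF C] by blast
  have re: "\<forall>a\<in>set as. Im a = 0"
  proof
    fix a assume a: "a \<in> set as"
    have "poly (char_poly ?C) a = 0" unfolding as(1) poly_prod_list prod_list_zero_iff
      using a by auto
    hence "eigenvalue ?C a" using eigenvalue_root_char_poly[OF C] by simp
    thus "Im a = 0" by (rule sym_real_eig[OF A sym])
  qed
  define rs where "rs = map Re as"
  interpret m: map_poly_inj_comm_ring_hom "complex_of_real" ..
  have eq: "as = map (\<lambda>r. complex_of_real r) rs" unfolding rs_def using re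
    by (induct as) (auto simp: complex_eq_iff)
  have "map_poly of_real (char_poly A) = char_poly ?C" by (rule of_real_hom.char_poly_hom[OF A, symmetric])
  also have "\<dots> = map_poly of_real (\<Prod>r\<leftarrow>rs. [:-r,1:])"
    unfolding as(1) eq m.hom_prod_list by (simp add: o_def)
  finally have "char_poly A = (\<Prod>r\<leftarrow>rs. [:-r,1:])" by simp
  moreover have "length rs = n" using as(2) rs_def by simp
  ultimately show ?thesis by blast
qed

lemma ut_pow:
  fixes T :: "'a::comm_ring_1 mat"
  assumes T: "T \<in> carrier_mat n n" and ut: "upper_triangular T"
  shows "upper_triangular (T ^\<^sub>m k) \<and> (\<forall>i<n. (T ^\<^sub>m k)$$(i,i) = (T$$(i,i))^k)"
proof (induct k)
  case 0 then show ?case using T by auto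
next
  case (Suc k)
  let ?X = "T ^\<^sub>m k"
  have X: "?X \<in> carrier_mat n n" using T by simp
  have e: "\<And>i j. i < n \<Longrightarrow> j < n \<Longrightarrow> (T ^\<^sub>m Suc k)$$(i,j) = (\<Sum>l<n. ?X$$(i,l) * T$$(l,j))"
    using X T by (simp add: scalar_prod_def lessThan_atLeast0)
  have Xu: "\<And>i l. l < i \<Longrightarrow> i < n \<Longrightarrow> ?X$$(i,l) = 0" using Suc X by auto
  have Tu: "\<And>i l. l < i \<Longrightarrow> i < n \<Longrightarrow> T$$(i,l) = 0" using ut T by auto
  show ?case
  proof
    show "upper_triangular (T ^\<^sub>m Suc k)"
    proof (rule upper_triangularI)
      fix i j assume ji: "j < i" and i: "i < dim_row (T ^\<^sub>m Suc k)"
      hence i: "i < n" using T by simp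
      have "(T ^\<^sub>m Suc k)$$(i,j) = (\<Sum>l<n. ?X$$(i,l) * T$$(l,j))" using e i ji by simp
      also have "\<dots> = 0"
      proof (rule sum.neutral, rule ballI)
        fix l assume l: "l \<in> {..<n}"
        show "?X$$(i,l) * T$$(l,j) = 0"
        proof (cases "l < i")
          case True then show ?thesis using Xu i by simp
        next
          case False then have "j < l" using ji by simp
          then show ?thesis using Tu l by simp
        qed
      qed
      finally show "(T ^\<^sub>m Suc k)$$(i,j) = 0" .
    qed
    show "\<forall>i<n. (T ^\<^sub>m Suc k)$$(i,i) = (T$$(i,i))^Suc k"
    proof (intro allI impI)
      fix i assume i: "i < n"
      have "(T ^\<^sub>m Suc k)$$(i,i) = (\<Sum>l<n. ?X$$(i,l) * T$$(l,i))" using e i by simp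
      also have "\<dots> = (\<Sum>l<n. if l = i then ?X$$(i,i) * T$$(i,i) else 0)"
      proof (rule sum.cong[OF refl])
        fix l assume l: "l \<in> {..<n}"
        show "?X$$(i,l) * T$$(l,i) = (if l = i then ?X$$(i,i) * T$$(i,i) else 0)"
        proof (cases "l < i")
          case True then show ?thesis using Xu i by simp
        next
          case False then show ?thesis using Tu l by auto
        qed
      qed
      also have "\<dots> = ?X$$(i,i) * T$$(i,i)" using i by simp
      also have "\<dots> = (T$$(i,i))^Suc k" using Suc i by simp
      finally show "(T ^\<^sub>m Suc k)$$(i,i) = (T$$(i,i))^Suc k" .
    qed
  qed
qed

lemma trace_comm:
  fixes X Y :: "'a::comm_ring_1 mat"
  assumes X: "X \<in> carrier_mat n n" and Y: "Y \<in> carrier_mat n n"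
  shows "(\<Sum>i<n. (X*Y)$$(i,i)) = (\<Sum>i<n. (Y*X)$$(i,i))"
proof -
  have "(\<Sum>i<n. (X*Y)$$(i,i)) = (\<Sum>i<n. \<Sum>l<n. X$$(i,l) * Y$$(l,i))"
    using X Y by (intro sum.cong[OF refl]) (simp add: scalar_prod_def lessThan_atLeast0)
  also have "\<dots> = (\<Sum>l<n. \<Sum>i<n. X$$(i,l) * Y$$(l,i))" by (rule sum.swap)
  also have "\<dots> = (\<Sum>i<n. (Y*X)$$(i,i))"
    using X Y by (intro sum.cong[OF refl]) (simp add: scalar_prod_def lessThan_atLeast0 mult.commute)
  finally show ?thesis .
qed

lemma trace_pow_shift:
  fixes A :: "real mat"
  assumes A: "A \<in> carrier_mat n n" and cp: "char_poly A = (\<Prod>r\<leftarrow>rs. [:-r,1:])"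
  shows "(\<Sum>i<n. ((A + c \<cdot>\<^sub>m 1\<^sub>m n) ^\<^sub>m k)$$(i,i)) = (\<Sum>r\<leftarrow>rs. (r + c)^k)"
proof -
  obtain T P Q where sd: "schur_decomposition A rs = (T,P,Q)" by (cases "schur_decomposition A rs") auto
  from schur_decomposition[OF A cp sd] have sim: "similar_mat_wit A T P Q"
    and ut: "upper_triangular T" and dg: "diag_mat T = rs" by auto
  from similar_mat_witD2[OF A sim] have PQ: "P * Q = 1\<^sub>m n" and QP: "Q * P = 1\<^sub>m n"
    and AT: "A = P * T * Q" and T: "T \<in> carrier_mat n n" and P: "P \<in> carrier_mat n n"
    and Q: "Q \<in> carrier_mat n n" by auto
  let ?I = "c \<cdot>\<^sub>m 1\<^sub>m n :: real mat"
  have I: "?I \<in> carrier_mat n n" by simp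
  have "P * (T + ?I) * Q = (P * T + P * ?I) * Q" using P T I by (simp add: mult_add_distrib_mat)
  also have "\<dots> = P * T * Q + P * ?I * Q" using P T I Q
    by (simp add: add_mult_distrib_mat[of _ n n])
  also have "P * ?I = c \<cdot>\<^sub>m P" using P by (simp add: mult_smult_distrib[OF P one_carrier_mat])
  also have "c \<cdot>\<^sub>m P * Q = c \<cdot>\<^sub>m (P * Q)" using P Q by (simp add: mult_smult_assoc_mat)
  finally have eq: "A + ?I = P * (T + ?I) * Q" using AT PQ by simp
  have sim2: "similar_mat_wit (A + ?I) (T + ?I) P Q"
    by (rule similar_mat_witI[OF PQ QP eq]) (use A T P Q in auto)
  let ?T = "T + ?I"
  have T': "?T \<in> carrier_mat n n" using T by simp
  have ut': "upper_triangular ?T" using ut T by (auto intro!: upper_triangularI elim!: upper_triangularD)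
  have pw: "(A + ?I) ^\<^sub>m k = P * (?T ^\<^sub>m k) * Q" by (rule similar_mat_wit_pow_id[OF sim2])
  have Tk: "?T ^\<^sub>m k \<in> carrier_mat n n" using T' by simp
  have "(\<Sum>i<n. ((A + ?I) ^\<^sub>m k)$$(i,i)) = (\<Sum>i<n. (P * (?T ^\<^sub>m k) * Q)$$(i,i))" using pw by simp
  also have "\<dots> = (\<Sum>i<n. (Q * (P * (?T ^\<^sub>m k)))$$(i,i))"
    by (rule trace_comm) (use P Q Tk in auto)
  also have "Q * (P * (?T ^\<^sub>m k)) = ?T ^\<^sub>m k" using P Q Tk QP
    by (simp add: assoc_mult_mat[symmetric, of Q n n P n _ n])
  also have "(\<Sum>i<n. (?T ^\<^sub>m k)$$(i,i)) = (\<Sum>i<n. (T$$(i,i) + c)^k)"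
    using ut_pow[OF T' ut', of k] T by simp
  also have "\<dots> = (\<Sum>r\<leftarrow>rs. (r + c)^k)"
  proof -
    have len: "length rs = n" and nth: "\<And>i. i < n \<Longrightarrow> rs ! i = T$$(i,i)"
      using dg T unfolding diag_mat_def by auto
    show ?thesis unfolding sum_list_sum_nth using len nth by (simp add: lessThan_atLeast0)
  qed
  finally show ?thesis .
qed

lemma final_ineq:
  fixes x t k n :: real
  assumes h: "x^2 + k * t^2 \<le> n * x" and t: "t \<ge> 0" and k: "k \<ge> 1" and n: "n \<ge> 0"
  shows "x + t \<le> n / 2 * (1 + sqrt ((k + 1) / k))"
proof -
  define y where "y = x - n/2"
  have e: "y^2 + k * t^2 \<le> n^2/4" using h unfolding y_def by (simp add: power2_eq_square algebra_simps)
  have "k * (y + t)^2 \<le> (k + 1) * (y^2 + k * t^2)"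
  proof -
    have "0 \<le> (y - k*t)^2" by simp
    thus ?thesis by (simp add: power2_eq_square algebra_simps)
  qed
  hence "(y + t)^2 \<le> (k + 1) / k * (y^2 + k * t^2)" using k
    by (simp add: field_simps)
  also have "\<dots> \<le> (k + 1) / k * (n^2/4)" using e k by (intro mult_left_mono) auto
  finally have le: "(y + t)^2 \<le> (k + 1) / k * (n^2/4)" .
  have "y + t \<le> sqrt ((y+t)^2)" by simp
  also have "\<dots> \<le> sqrt ((k + 1) / k * (n^2/4))" using le by (rule real_sqrt_le_mono)
  also have "\<dots> = sqrt ((k + 1) / k) * (n / 2)"
    using n by (simp add: real_sqrt_mult power_divide real_sqrt_divide)
  finally show ?thesis unfolding y_def by (simp add: algebra_simps)
qed

lemma power_limit:
  fixes x y c :: real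
  assumes x: "x \<ge> 0" and y: "y \<ge> 0" and h: "\<And>m. x^(2^(Suc m)) \<le> c * y^(2^(Suc m))"
  shows "x \<le> y"
proof (rule ccontr)
  assume "\<not> x \<le> y"
  hence xy: "y < x" by simp
  show False
  proof (cases "y = 0")
    case True
    have "x^(2^(Suc 0)) \<le> c * y^(2^(Suc 0))" by (rule h)
    with True have "x^2 \<le> 0" by simp
    with xy True show False by (simp add: power2_eq_square) (metis mult_pos_pos not_less)
  next
    case False
    with y have yp: "y > 0" by simp
    define q where "q = x / y"
    have q1: "q > 1" unfolding q_def using xy yp by simp
    obtain m :: nat where m: "real m > c / (q - 1)" using reals_Archimedean2 by blast
    have "1 + real (2^(Suc m)) * (q - 1) \<le> (1 + (q - 1))^(2^(Suc m))"
      by (rule Bernoulli_inequality) (use q1 in simp)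
    hence b: "1 + real (2^(Suc m)) * (q - 1) \<le> q^(2^(Suc m))" by simp
    have "real m \<le> real (2^(Suc m))"
    proof -
      have "m < 2^m" by (rule less_exp)
      hence "m < 2 * 2^m" by linarith
      hence "m \<le> 2^(Suc m)" by simp
      thus ?thesis by linarith
    qed
    hence "real m * (q - 1) \<le> real (2^(Suc m)) * (q - 1)" using q1 by (intro mult_right_mono) auto
    moreover have "c < real m * (q - 1)" using m q1 by (simp add: field_simps)
    ultimately have cq: "c < q^(2^(Suc m))" using b by linarith
    have "x^(2^(Suc m)) = q^(2^(Suc m)) * y^(2^(Suc m))" unfolding q_def using yp
      by (simp add: power_divide)
    also have "\<dots> > c * y^(2^(Suc m))" using cq yp by (intro mult_strict_right_mono) auto
    finally show False using h[of m] by simp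
  qed
qed

lemma cs_sum:
  fixes r :: "nat \<Rightarrow> real"
  shows "(\<Sum>w<n. r w)^2 \<le> real n * (\<Sum>w<n. (r w)^2)"
proof -
  have "0 \<le> (\<Sum>u<n. \<Sum>v<n. (r u - r v)^2)" by (intro sum_nonneg) auto
  also have "\<dots> = (\<Sum>u<n. \<Sum>v<n. (r u)^2 + (r v)^2 - 2 * (r u * r v))"
    by (simp add: power2_eq_square algebra_simps)
  also have "\<dots> = 2 * real n * (\<Sum>w<n. (r w)^2) - 2 * (\<Sum>w<n. r w)^2"
    by (simp add: sum_subtractf sum.distrib sum_distrib_left sum_distrib_right power2_eq_square
        algebra_simps)
  finally show ?thesis by simp
qed

lemma pow_mat_add:
  fixes B :: "'a::comm_ring_1 mat"
  assumes B: "B \<in> carrier_mat n n"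
  shows "B ^\<^sub>m (k + l) = B ^\<^sub>m k * B ^\<^sub>m l"
proof (induct l)
  case 0 then show ?case using B by simp
next
  case (Suc l)
  have "B ^\<^sub>m (k + Suc l) = (B ^\<^sub>m k * B ^\<^sub>m l) * B" using Suc by simp
  also have "\<dots> = B ^\<^sub>m k * (B ^\<^sub>m l * B)" using B
    by (intro assoc_mult_mat[of _ n n _ n _ n]) auto
  finally show ?case by simp
qed

lemma pow_mat_one: "B \<in> carrier_mat n n \<Longrightarrow> B ^\<^sub>m 1 = B" by simp

lemma pow_mat_comm:
  fixes B :: "'a::comm_ring_1 mat"
  assumes B: "B \<in> carrier_mat n n"
  shows "B * B ^\<^sub>m k = B ^\<^sub>m k * B"
proof -
  have "B * B ^\<^sub>m k = B ^\<^sub>m 1 * B ^\<^sub>m k" using B by simp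
  also have "\<dots> = B ^\<^sub>m (1 + k)" by (rule pow_mat_add[OF B, symmetric])
  also have "\<dots> = B ^\<^sub>m (k + 1)" by (simp add: add.commute)
  also have "\<dots> = B ^\<^sub>m k * B ^\<^sub>m 1" by (rule pow_mat_add[OF B])
  finally have "B * B ^\<^sub>m k = B ^\<^sub>m k * B ^\<^sub>m 1" .
  moreover have "B ^\<^sub>m 1 = B" using B by simp
  ultimately show ?thesis by simp
qed

lemma pow_mat_sym:
  fixes B :: "'a::comm_ring_1 mat"
  assumes B: "B \<in> carrier_mat n n" and sym: "\<forall>i<n. \<forall>j<n. B$$(i,j) = B$$(j,i)"
  shows "\<forall>i<n. \<forall>j<n. (B ^\<^sub>m k)$$(i,j) = (B ^\<^sub>m k)$$(j,i)"
proof (induct k)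
  case 0 then show ?case using B by auto
next
  case (Suc k)
  let ?X = "B ^\<^sub>m k"
  have X: "?X \<in> carrier_mat n n" using B by simp
  show ?case
  proof (intro allI impI)
    fix i j assume i: "i < n" and j: "j < n"
    have "(B ^\<^sub>m Suc k)$$(j,i) = (\<Sum>l<n. ?X$$(j,l) * B$$(l,i))"
      using X B i j by (simp add: scalar_prod_def lessThan_atLeast0)
    also have "\<dots> = (\<Sum>l<n. B$$(i,l) * ?X$$(l,j))"
      using Suc sym i j by (intro sum.cong[OF refl]) (simp add: mult.commute)
    also have "\<dots> = (B * ?X)$$(i,j)"
      using X B i j by (simp add: scalar_prod_def lessThan_atLeast0)
    also have "B * ?X = B ^\<^sub>m Suc k" using pow_mat_comm[OF B] by simp
    finally show "(B ^\<^sub>m Suc k)$$(i,j) = (B ^\<^sub>m Suc k)$$(j,i)" by simp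
  qed
qed

lemma sq_entries:
  fixes C :: "real mat"
  assumes C: "C \<in> carrier_mat n n" and sym: "\<forall>i<n. \<forall>j<n. C$$(i,j) = C$$(j,i)"
  shows "(\<Sum>u<n. \<Sum>v<n. (C*C)$$(u,v)) \<le> real n * (\<Sum>u<n. (C*C)$$(u,u))"
    and "(\<Sum>u<n. \<Sum>v<n. C$$(u,v))^2 \<le> real n * (\<Sum>u<n. \<Sum>v<n. (C*C)$$(u,v))"
proof -
  have e: "\<And>u v. u < n \<Longrightarrow> v < n \<Longrightarrow> (C*C)$$(u,v) = (\<Sum>w<n. C$$(w,u) * C$$(w,v))"
    using C sym by (simp add: scalar_prod_def lessThan_atLeast0)
  have two: "\<And>u v. u < n \<Longrightarrow> v < n \<Longrightarrow> 2 * (C*C)$$(u,v) \<le> (C*C)$$(u,u) + (C*C)$$(v,v)"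
  proof -
    fix u v assume u: "u < n" and v: "v < n"
    have "0 \<le> (\<Sum>w<n. (C$$(w,u) - C$$(w,v))^2)" by (intro sum_nonneg) auto
    also have "\<dots> = (\<Sum>w<n. C$$(w,u) * C$$(w,u)) + (\<Sum>w<n. C$$(w,v) * C$$(w,v))
        - 2 * (\<Sum>w<n. C$$(w,u) * C$$(w,v))"
      by (simp add: power2_eq_square algebra_simps sum_subtractf sum.distrib sum_distrib_left)
    finally show "2 * (C*C)$$(u,v) \<le> (C*C)$$(u,u) + (C*C)$$(v,v)" using e u v by simp
  qed
  have "2 * (\<Sum>u<n. \<Sum>v<n. (C*C)$$(u,v)) = (\<Sum>u<n. \<Sum>v<n. 2 * (C*C)$$(u,v))"
    by (simp add: sum_distrib_left)
  also have "\<dots> \<le> (\<Sum>u<n. \<Sum>v<n. (C*C)$$(u,u) + (C*C)$$(v,v))"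
    using two by (intro sum_mono) auto
  also have "\<dots> = 2 * (real n * (\<Sum>u<n. (C*C)$$(u,u)))"
    by (simp add: sum.distrib sum_distrib_left)
  finally show "(\<Sum>u<n. \<Sum>v<n. (C*C)$$(u,v)) \<le> real n * (\<Sum>u<n. (C*C)$$(u,u))" by simp
  have "(\<Sum>u<n. \<Sum>v<n. (C*C)$$(u,v)) = (\<Sum>u<n. \<Sum>v<n. \<Sum>w<n. C$$(w,u) * C$$(w,v))"
    using e by simp
  also have "\<dots> = (\<Sum>u<n. \<Sum>w<n. \<Sum>v<n. C$$(w,u) * C$$(w,v))"
    by (rule sum.cong[OF refl], rule sum.swap)
  also have "\<dots> = (\<Sum>w<n. \<Sum>u<n. \<Sum>v<n. C$$(w,u) * C$$(w,v))"
    by (rule sum.swap)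
  also have "\<dots> = (\<Sum>w<n. (\<Sum>u<n. C$$(w,u))^2)"
    by (simp add: power2_eq_square sum_product)
  finally have eq: "(\<Sum>u<n. \<Sum>v<n. (C*C)$$(u,v)) = (\<Sum>w<n. (\<Sum>u<n. C$$(w,u))^2)" .
  show "(\<Sum>u<n. \<Sum>v<n. C$$(u,v))^2 \<le> real n * (\<Sum>u<n. \<Sum>v<n. (C*C)$$(u,v))"
    unfolding eq by (rule cs_sum)
qed

lemma rayleigh_ones:
  fixes A :: "real mat"
  assumes A: "A \<in> carrier_mat n n" and sym: "\<forall>i<n. \<forall>j<n. A$$(i,j) = A$$(j,i)"
    and cp: "char_poly A = (\<Prod>r\<leftarrow>rs. [:-r,1:])" and len: "length rs = n"
    and n: "n \<ge> 1" and bnd: "\<forall>r\<in>set rs. r + c \<ge> 0" and y: "\<forall>r\<in>set rs. r \<le> y"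
  shows "(\<Sum>u<n. \<Sum>v<n. A$$(u,v)) \<le> real n * y"
proof -
  define B where "B = A + c \<cdot>\<^sub>m 1\<^sub>m n"
  have B: "B \<in> carrier_mat n n" unfolding B_def using A by simp
  have symB: "\<forall>i<n. \<forall>j<n. B$$(i,j) = B$$(j,i)" unfolding B_def using A sym by auto
  define sa :: "real mat \<Rightarrow> real" where "sa M = (\<Sum>u<n. \<Sum>v<n. M$$(u,v))" for M
  define tr :: "real mat \<Rightarrow> real" where "tr M = (\<Sum>u<n. M$$(u,u))" for M
  have saB: "sa B = sa A + c * real n"
  proof -
    have "sa B = (\<Sum>u<n. \<Sum>v<n. A$$(u,v) + (if u = v then c else 0))"
      unfolding sa_def B_def using A by (intro sum.cong[OF refl]) auto
    also have "\<dots> = sa A + (\<Sum>u<n. \<Sum>v<n. (if u = v then c else 0))"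
      unfolding sa_def by (simp add: sum.distrib)
    also have "(\<Sum>u<n. \<Sum>v<n. (if u = v then c else 0)) = (\<Sum>u<n. c)"
      by (intro sum.cong[OF refl]) auto
    finally show ?thesis by simp
  qed
  have rs_ne: "rs \<noteq> []" using len n by auto
  have yc: "y + c \<ge> 0" using rs_ne bnd y by (cases rs) force+
  have trB: "\<And>k. tr (B ^\<^sub>m k) \<le> real n * (y + c)^k"
  proof -
    fix k
    have "tr (B ^\<^sub>m k) = (\<Sum>r\<leftarrow>rs. (r + c)^k)" unfolding tr_def B_def
      by (rule trace_pow_shift[OF A cp])
    also have "\<dots> \<le> (\<Sum>r\<leftarrow>rs. (y + c)^k)"
      by (rule sum_list_mono) (use bnd y in \<open>auto intro: power_mono\<close>)
    also have "\<dots> = real n * (y + c)^k" using len by (simp add: sum_list_triv)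
    finally show "tr (B ^\<^sub>m k) \<le> real n * (y + c)^k" .
  qed
  define s where "s m = sa (B ^\<^sub>m (2^m))" for m
  have sq: "\<And>m. B ^\<^sub>m (2^(Suc m)) = B ^\<^sub>m (2^m) * B ^\<^sub>m (2^m)"
    using pow_mat_add[OF B] by (metis mult_2 power_Suc)
  have Cm: "\<And>m. B ^\<^sub>m (2^m) \<in> carrier_mat n n" using B by simp
  have Cs: "\<And>m. \<forall>i<n. \<forall>j<n. (B ^\<^sub>m (2^m))$$(i,j) = (B ^\<^sub>m (2^m))$$(j,i)"
    using pow_mat_sym[OF B symB] by blast
  have c1: "\<And>m. s (Suc m) \<le> real n * tr (B ^\<^sub>m (2^(Suc m)))"
    unfolding s_def sa_def tr_def sq by (rule sq_entries(1)[OF Cm Cs])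
  have c2: "\<And>m. (s m)^2 \<le> real n * s (Suc m)"
    unfolding s_def sa_def sq by (rule sq_entries(2)[OF Cm Cs])
  define x where "x = s 0 / real n"
  have s0: "s 0 = sa B" unfolding s_def using B by simp
  show ?thesis
  proof (cases "x \<ge> 0")
    case False
    hence "sa B < 0" using n unfolding x_def s0 by (metis divide_nonneg_nonneg not_le of_nat_0_le_iff)
    hence "sa A + c * real n < 0" using saB by simp
    moreover have "0 \<le> real n * (y + c)" using yc by simp
    ultimately show ?thesis unfolding sa_def by (simp add: algebra_simps)
  next
    case True
    have c3: "real n * x^(2^m) \<le> s m" for m
    proof (induct m)
      case 0 then show ?case unfolding x_def using n by simp
    next
      case (Suc m)
      have nn: "0 \<le> real n * x^(2^m)" using True by simp
      have "real n * x^(2^(Suc m)) * real n = (real n * x^(2^m))^2"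
        by (simp add: power_mult power2_eq_square algebra_simps)
      also have "\<dots> \<le> (s m)^2" using Suc nn by (intro power_mono) auto
      also have "\<dots> \<le> real n * s (Suc m)" by (rule c2)
      finally have "real n * x^(2^(Suc m)) * real n \<le> s (Suc m) * real n" by (simp add: mult.commute)
      thus ?case using n by (simp add: ac_simps)
    qed
    have "x^(2^(Suc m)) \<le> real n * (y + c)^(2^(Suc m))" for m
    proof -
      have "real n * x^(2^(Suc m)) \<le> real n * (real n * (y + c)^(2^(Suc m)))"
        using c3[of "Suc m"] c1[of m] trB[of "2^(Suc m)"] n
        by (smt (verit) mult_left_mono of_nat_0_le_iff)
      thus ?thesis using n by simp
    qed
    hence "x \<le> y + c" by (intro power_limit[OF True yc])
    hence "sa B \<le> real n * (y + c)" unfolding x_def s0 using n by (simp add: field_simps)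
    thus ?thesis using saB unfolding sa_def by (simp add: algebra_simps)
  qed
qed


lemma proots_linear_prod: "proots (\<Prod>r\<leftarrow>rs. [:-r,1:]) = mset (rs :: real list)"
proof (induct rs)
  case Nil then show ?case by simp
next
  case (Cons r rs)
  have ne: "(\<Prod>r\<leftarrow>rs. [:-r,1:]) \<noteq> (0 :: real poly)"
    by (auto simp: prod_list_zero_iff)
  have "(\<Prod>r\<leftarrow>r # rs. [:-r,1:]) = [:-r,1:] * (\<Prod>r\<leftarrow>rs. [:-r,1:])" by simp
  hence "proots (\<Prod>r\<leftarrow>r # rs. [:-r,1:]) = proots [:-r,1:] + proots (\<Prod>r\<leftarrow>rs. [:-r,1:])"
    using proots_mult[OF _ ne, of "[:-r,1:]"] by simp
  also have "\<dots> = {#r#} + mset rs" using Cons by (simp add: proots_linear_factor)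
  finally show ?case by simp
qed

lemma sum_list_mset_eq:
  fixes f :: "'b \<Rightarrow> 'a::comm_monoid_add"
  assumes "mset xs = mset ys"
  shows "sum_list (map f xs) = sum_list (map f (ys :: 'b list)) "
proof -
  have "sum_list (map f xs) = sum_mset (mset (map f xs))" by (rule sum_mset_sum_list[symmetric])
  also have "\<dots> = sum_mset (mset (map f ys))" by (simp only: mset_map assms)
  also have "\<dots> = sum_list (map f ys)" by (rule sum_mset_sum_list)
  finally show ?thesis .
qed

lemma part1:
  assumes n: "1 \<le> n" and j: "j \<le> n - 1" and G: "loop_graph_adj n A"
  shows "eig A 1 - eig A (n - j) \<le> real n / 2 * (1 + sqrt ((real j + 2) / (real j + 1)))"
proof -
  from G have A: "A \<in> carrier_mat n n"
    and a01: "\<And>u v. u < n \<Longrightarrow> v < n \<Longrightarrow> A$$(u,v) = 0 \<or> A$$(u,v) = 1"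
    and sym: "\<forall>i<n. \<forall>j<n. A$$(i,j) = A$$(j,i)"
    unfolding loop_graph_adj_def by auto
  obtain rs where cp: "char_poly A = (\<Prod>r\<leftarrow>rs. [:-r,1:])" and len: "length rs = n"
    using sym_char_poly_split[OF A sym] by blast
  define es where "es = eigs A"
  have es: "es = rev (sort rs)" unfolding es_def eigs_def cp proots_linear_prod
    by (simp add: sorted_list_of_multiset_mset)
  have les: "length es = n" using len es by simp
  have mes: "mset es = mset rs" using es by simp
  have dec: "\<And>i k. i \<le> k \<Longrightarrow> k < n \<Longrightarrow> es!k \<le> es!i"
  proof -
    fix i k assume ik: "i \<le> k" and k: "k < n"
    have "es!k = sort rs ! (n - Suc k)" "es!i = sort rs ! (n - Suc i)"
      using es len ik k by (auto simp: rev_nth)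
    moreover have "sort rs ! (n - Suc k) \<le> sort rs ! (n - Suc i)"
      by (rule sorted_nth_mono) (use ik k len in auto)
    ultimately show "es!k \<le> es!i" by simp
  qed
  have eig: "\<And>k. eig A k = es!(k-1)" unfolding eig_def es_def by simp
  have sumes: "sum_list (map f rs) = (\<Sum>k<n. f (es!k))" for f
  proof -
    have "sum_list (map f rs) = sum_list (map f es)" by (rule sum_list_mset_eq[OF mes[symmetric]])
    also have "\<dots> = (\<Sum>k=0..<n. map f es ! k)" unfolding sum_list_sum_nth using les by simp
    also have "\<dots> = (\<Sum>k<n. f (es!k))" unfolding lessThan_atLeast0 using les
      by (intro sum.cong) auto
    finally show ?thesis .
  qed
  define S where "S = (\<Sum>u<n. \<Sum>v<n. A$$(u,v))"
  have S_sq: "(\<Sum>k<n. (es!k)^2) = S"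
  proof -
    have A0: "A + 0 \<cdot>\<^sub>m 1\<^sub>m n = A" using A by (intro eq_matI) auto
    have "(\<Sum>i<n. ((A + 0 \<cdot>\<^sub>m 1\<^sub>m n) ^\<^sub>m 2)$$(i,i)) = (\<Sum>r\<leftarrow>rs. (r + 0)^2)"
      by (rule trace_pow_shift[OF A cp])
    hence "(\<Sum>k<n. (es!k)^2) = (\<Sum>i<n. (A ^\<^sub>m 2)$$(i,i))" unfolding A0 sumes by simp
    also have "A ^\<^sub>m 2 = A * A"
      using A by (simp add: numeral_2_eq_2)
    also have "(\<Sum>i<n. (A * A)$$(i,i)) = (\<Sum>i<n. \<Sum>l<n. A$$(i,l) * A$$(l,i))"
      using A by (intro sum.cong[OF refl]) (simp add: scalar_prod_def lessThan_atLeast0)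
    also have "\<dots> = S" unfolding S_def
    proof (intro sum.cong[OF refl])
      fix i l assume i: "i \<in> {..<n}" and l: "l \<in> {..<n}"
      show "A$$(i,l) * A$$(l,i) = A$$(i,l)" using a01[of i l] sym i l by auto
    qed
    finally show ?thesis .
  qed
  have S_n2: "S \<le> real n * real n"
  proof -
    have "S \<le> (\<Sum>u<n. \<Sum>v<n. (1::real))" unfolding S_def
      by (intro sum_mono) (use a01 in force)
    thus ?thesis by simp
  qed
  have bnd: "\<forall>r\<in>set rs. r + real n \<ge> 0"
  proof
    fix r assume "r \<in> set rs"
    hence "r \<in> set es" using mes by (metis set_mset_mset)
    then obtain k where k: "k < n" "r = es!k" using les by (auto simp: in_set_conv_nth)
    have "r^2 \<le> (\<Sum>k<n. (es!k)^2)" unfolding k(2) by (rule member_le_sum) (use k in auto)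
    hence "r^2 \<le> (real n)^2" using S_sq S_n2 by (simp add: power2_eq_square)
    hence "\<bar>r\<bar> \<le> real n" using abs_le_square_iff by (metis abs_of_nat)
    thus "r + real n \<ge> 0" by simp
  qed
  have ymax: "\<forall>r\<in>set rs. r \<le> es!0"
  proof
    fix r assume "r \<in> set rs"
    hence "r \<in> set es" using mes by (metis set_mset_mset)
    then obtain k where k: "k < n" "r = es!k" using les by (auto simp: in_set_conv_nth)
    show "r \<le> es!0" using dec[of 0 k] k by simp
  qed
  have S_le: "S \<le> real n * es!0" unfolding S_def
    by (rule rayleigh_ones[OF A sym cp len n bnd ymax])
  have bpos: "0 \<le> real n / 2 * (1 + sqrt ((real j + 2) / (real j + 1)))" by simp
  show ?thesis
  proof (cases "j = n - 1")
    case True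
    hence "n - j = 1" using n by simp
    thus ?thesis using bpos by simp
  next
    case False
    hence j1: "j + 1 < n" using j by simp
    define p where "p = n - j - 1"
    have p1: "1 \<le> p" and pn: "p < n" unfolding p_def using j1 by auto
    define mu where "mu = es!p"
    define m where "m = max 0 (- mu)"
    have sq_ge: "\<And>k. k \<in> {p..<n} \<Longrightarrow> m^2 \<le> (es!k)^2"
    proof -
      fix k assume k: "k \<in> {p..<n}"
      have le: "es!k \<le> mu" unfolding mu_def using dec k by auto
      show "m^2 \<le> (es!k)^2"
      proof (cases "mu < 0")
        case True
        hence "m = - mu" unfolding m_def by simp
        moreover have "(- mu)^2 \<le> (- es!k)^2" using True le by (intro power_mono) auto
        ultimately show ?thesis by simp
      next
        case False thus ?thesis unfolding m_def by simp
      qed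
    qed
    have cardp: "card {p..<n} = j + 1" unfolding p_def using j1 by simp
    have "(es!0)^2 + real (j + 1) * m^2 = (es!0)^2 + (\<Sum>k\<in>{p..<n}. m^2)"
      using cardp by simp
    also have "\<dots> \<le> (es!0)^2 + (\<Sum>k\<in>{p..<n}. (es!k)^2)"
      using sq_ge by (intro add_left_mono sum_mono) auto
    also have "\<dots> = (\<Sum>k\<in>insert 0 {p..<n}. (es!k)^2)" using p1 by simp
    also have "\<dots> \<le> (\<Sum>k<n. (es!k)^2)" using pn by (intro sum_mono2) auto
    finally have key: "(es!0)^2 + (real j + 1) * m^2 \<le> real n * es!0" using S_sq S_le by (simp add: add.commute)
    have "es!0 + m \<le> real n / 2 * (1 + sqrt ((real j + 1 + 1) / (real j + 1)))"
      by (rule final_ineq[OF key]) (auto simp: m_def)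
    moreover have "eig A 1 - eig A (n - j) \<le> es!0 + m"
      unfolding eig mu_def m_def p_def using n j1 by (simp add: Suc_diff_Suc)
    ultimately show ?thesis by (simp add: add.assoc)
  qed
qed

lemma finite_simple: "finite {A. simple_graph_adj n A}"
proof -
  let ?I = "{..<n} \<times> {..<n}"
  have "{A. simple_graph_adj n A} \<subseteq> (\<lambda>f. mat n n f) ` (PiE ?I (\<lambda>_. {0,1::real}))"
  proof
    fix A assume "A \<in> {A. simple_graph_adj n A}"
    hence A: "A \<in> carrier_mat n n" and a01: "\<forall>u<n. \<forall>v<n. A$$(u,v) = 0 \<or> A$$(u,v) = 1"
      unfolding simple_graph_adj_def loop_graph_adj_def by auto
    have "A = mat n n (restrict (\<lambda>p. A $$ p) ?I)" using A by (intro eq_matI) auto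
    moreover have "restrict (\<lambda>p. A $$ p) ?I \<in> PiE ?I (\<lambda>_. {0,1::real})" using a01 by auto
    ultimately show "A \<in> (\<lambda>f. mat n n f) ` (PiE ?I (\<lambda>_. {0,1::real}))" by blast
  qed
  moreover have "finite (PiE ?I (\<lambda>_. {0,1::real}))" by (intro finite_PiE) auto
  ultimately show ?thesis by (meson finite_imageI finite_subset)
qed

lemma spread_bound:
  assumes n: "1 \<le> n" and j: "j \<le> n - 1"
  shows "spread 0 j n \<le> real n / 2 * (1 + sqrt ((real j + 2) / (real j + 1)))"
proof -
  have eq: "{eig A (0+1) - eig A (n-j) | A. simple_graph_adj n A}
      = (\<lambda>A. eig A 1 - eig A (n-j)) ` {A. simple_graph_adj n A}" by auto
  have ne: "0\<^sub>m n n \<in> {A. simple_graph_adj n A}"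
    unfolding simple_graph_adj_def loop_graph_adj_def by auto
  show ?thesis unfolding spread_def eq
  proof (subst Max_le_iff)
    show "finite ((\<lambda>A. eig A 1 - eig A (n-j)) ` {A. simple_graph_adj n A})"
      by (intro finite_imageI finite_simple)
    show "(\<lambda>A. eig A 1 - eig A (n-j)) ` {A. simple_graph_adj n A} \<noteq> {}" using ne by blast
    show "\<forall>a\<in>(\<lambda>A. eig A 1 - eig A (n-j)) ` {A. simple_graph_adj n A}.
        a \<le> real n / 2 * (1 + sqrt ((real j + 2) / (real j + 1)))"
      using part1[OF n j] unfolding simple_graph_adj_def by auto
  qed
qed

theorem theorem1p2:
  shows "(\<forall>(n::nat) (j::nat) A. 1 \<le> n \<longrightarrow> j \<le> n - 1 \<longrightarrow> loop_graph_adj n A \<longrightarrow>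
            eig A 1 - eig A (n - j) \<le> real n / 2 * (1 + sqrt ((real j + 2) / (real j + 1))))
       \<and> (\<forall>(j::nat) (L::real). ((\<lambda>n. spread 0 j n / real n) \<longlonglongrightarrow> L) \<longrightarrow>
            L \<le> 1 / 2 * (1 + sqrt ((real j + 2) / (real j + 1))))"
proof (intro conjI allI impI)
  fix n j :: nat and A assume "1 \<le> n" "j \<le> n - 1" "loop_graph_adj n A"
  thus "eig A 1 - eig A (n - j) \<le> real n / 2 * (1 + sqrt ((real j + 2) / (real j + 1)))"
    by (rule part1)
next
  fix j :: nat and L :: real
  assume lim: "(\<lambda>n. spread 0 j n / real n) \<longlonglongrightarrow> L"
  show "L \<le> 1 / 2 * (1 + sqrt ((real j + 2) / (real j + 1)))"
  proof (rule LIMSEQ_le_const2[OF lim], intro exI allI impI)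
    fix n assume n: "n \<ge> j + 1"
    have "spread 0 j n \<le> real n / 2 * (1 + sqrt ((real j + 2) / (real j + 1)))"
      by (rule spread_bound) (use n in auto)
    moreover have "real n > 0" using n by simp
    ultimately show "spread 0 j n / real n \<le> 1 / 2 * (1 + sqrt ((real j + 2) / (real j + 1)))"
      by (simp add: divide_le_eq mult.commute)
  qed
qed

end
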